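(* Let $n\ge 2k\ge 2$, let $S\subseteq\{0,1,\ldots,k-1\}$ be nonempty, and let $X=\bigcup_{i\in S}J(n,k,i)$ (the graph on the $k$-subsets of $\{1,\ldots,n\}$ in which $A\sim B$ iff $|A\cap B|\in S$). If there is perfect state transfer in $X$ between two distinct vertices $A$ and $B$, then $B=\{1,\ldots,n\}\setminus A$.
   Context: $J(n,k,i)$ is the graph on the $k$-subsets of $\{1,\ldots,n\}$ with $A\sim B$ iff $|A\cap B|=i$. For a simple graph $X$ with adjacency matrix $A$, let $\mathcal{H}_X(t)=e^{itA}$; there is perfect state transfer between vertices $u\ne v$ if $|\mathcal{H}_X(\tau)_{u,v}|=1$ for some $\tau>0$. *)

theory Defs
  imports "HOL-Analysis.Analysis"
begin

text \<open>Matrices indexed by a finite vertex set V are represented as functions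
  'a => 'a => complex; only entries with indices in V are meaningful.\<close>

definition mat_mult :: "'a set \<Rightarrow> ('a \<Rightarrow> 'a \<Rightarrow> complex) \<Rightarrow> ('a \<Rightarrow> 'a \<Rightarrow> complex) \<Rightarrow> ('a \<Rightarrow> 'a \<Rightarrow> complex)" where
  "mat_mult V M N = (\<lambda>u v. \<Sum>w\<in>V. M u w * N w v)"

fun mat_pow :: "'a set \<Rightarrow> ('a \<Rightarrow> 'a \<Rightarrow> complex) \<Rightarrow> nat \<Rightarrow> ('a \<Rightarrow> 'a \<Rightarrow> complex)" where
  "mat_pow V M 0 = (\<lambda>u v. if u = v then 1 else 0)"
| "mat_pow V M (Suc m) = mat_mult V M (mat_pow V M m)"

definition mat_exp :: "'a set \<Rightarrow> ('a \<Rightarrow> 'a \<Rightarrow> complex) \<Rightarrow> ('a \<Rightarrow> 'a \<Rightarrow> complex)" where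
  "mat_exp V M = (\<lambda>u v. \<Sum>m. mat_pow V M m u v / of_nat (fact m))"

definition adj_matrix :: "('a \<Rightarrow> 'a \<Rightarrow> bool) \<Rightarrow> ('a \<Rightarrow> 'a \<Rightarrow> complex)" where
  "adj_matrix E = (\<lambda>u v. if E u v then 1 else 0)"

definition transition :: "'a set \<Rightarrow> ('a \<Rightarrow> 'a \<Rightarrow> bool) \<Rightarrow> real \<Rightarrow> ('a \<Rightarrow> 'a \<Rightarrow> complex)" where
  "transition V E t = mat_exp V (\<lambda>u v. \<i> * of_real t * adj_matrix E u v)"

definition perfect_state_transfer :: "'a set \<Rightarrow> ('a \<Rightarrow> 'a \<Rightarrow> bool) \<Rightarrow> 'a \<Rightarrow> 'a \<Rightarrow> bool" where
  "perfect_state_transfer V E u v \<longleftrightarrow>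
     u \<in> V \<and> v \<in> V \<and> u \<noteq> v \<and> (\<exists>\<tau>>0. cmod (transition V E \<tau> u v) = 1)"

definition ksubsets :: "nat \<Rightarrow> nat \<Rightarrow> nat set set" where
  "ksubsets n k = {A. A \<subseteq> {1..n} \<and> card A = k}"

text \<open>Adjacency of the union over i in S of J(n,k,i): |A \<inter> B| \<in> S (and A \<noteq> B,
  automatic when S \<subseteq> {0..k-1}).\<close>
definition johnson_union_adj :: "nat set \<Rightarrow> nat set \<Rightarrow> nat set \<Rightarrow> bool" where
  "johnson_union_adj S A B \<longleftrightarrow> A \<noteq> B \<and> card (A \<inter> B) \<in> S"

end

theory Submission
  imports Defs
begin

lemma mat_mult_assoc:
  "mat_mult V (mat_mult V A B) C = mat_mult V A (mat_mult V B C)"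
  unfolding mat_mult_def
  apply (rule ext, rule ext)
  apply (simp add: sum_distrib_left sum_distrib_right mult.assoc)
  by (rule sum.swap)

lemma sum_delta_l:
  assumes "finite V" "u \<in> V"
  shows "(\<Sum>w\<in>V. (if u = w then 1 else 0) * (f w::complex)) = f u"
  using assms by (simp add: if_distrib[of "\<lambda>x. x * _"] cong: if_cong)

lemma sum_delta_r:
  assumes "finite V" "u \<in> V"
  shows "(\<Sum>w\<in>V. (f w::complex) * (if w = u then 1 else 0)) = f u"
  using assms by (simp add: if_distrib[of "\<lambda>x. _ * x"] cong: if_cong)

lemma mat_pow_add:
  assumes "finite V" "u \<in> V"
  shows "mat_mult V (mat_pow V M i) (mat_pow V M j) u v = mat_pow V M (i + j) u v"
  using assms(2)
proof (induction i arbitrary: u)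
  case 0
  then show ?case by (simp add: mat_mult_def sum_delta_l assms(1))
next
  case (Suc i)
  have "mat_mult V (mat_pow V M (Suc i)) (mat_pow V M j) u v
      = mat_mult V M (mat_mult V (mat_pow V M i) (mat_pow V M j)) u v"
    by (simp add: mat_mult_assoc)
  also have "\<dots> = mat_mult V M (mat_pow V M (i + j)) u v"
    unfolding mat_mult_def[of V M] using Suc.IH by (auto intro!: sum.cong)
  finally show ?case by simp
qed

lemma mat_pow_neg:
  "mat_pow V (\<lambda>u v. - M u v) m = (\<lambda>u v. (-1)^m * mat_pow V M m u v)"
  by (induction m) (auto simp: mat_mult_def sum_distrib_left intro!: ext sum.cong)

lemma mat_pow_cnj:
  "cnj (mat_pow V M m u v) = mat_pow V (\<lambda>u v. cnj (M u v)) m u v"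
  by (induction m arbitrary: u v) (auto simp: mat_mult_def)

lemma mat_pow_sym:
  assumes sym: "\<And>u v. M u v = M v u" and fin: "finite V" and "u \<in> V" "v \<in> V"
  shows "mat_pow V M m u v = mat_pow V M m v u"
  using assms(3,4)
proof (induction m arbitrary: u v)
  case 0
  then show ?case by auto
next
  case (Suc m)
  have "mat_pow V M (Suc m) u v = (\<Sum>w\<in>V. mat_pow V M m v w * mat_pow V M 1 w u)"
    using Suc by (auto simp: mat_mult_def sym mult.commute sum_delta_r fin intro!: sum.cong)
  also have "\<dots> = mat_mult V (mat_pow V M m) (mat_pow V M 1) v u"
    by (simp add: mat_mult_def)
  also have "\<dots> = mat_pow V M (Suc m) v u"
    using mat_pow_add[OF fin Suc.prems(2), of M m 1] by (metis Suc_eq_plus1)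
  finally show ?case .
qed

lemma mat_pow_bound:
  assumes "\<And>u v. cmod (M u v) \<le> Bd" "0 \<le> Bd"
  shows "cmod (mat_pow V M m u v) \<le> (real (card V) * Bd) ^ m"
proof (induction m arbitrary: u v)
  case 0
  then show ?case by auto
next
  case (Suc m)
  have "cmod (mat_pow V M (Suc m) u v) \<le> (\<Sum>w\<in>V. cmod (M u w * mat_pow V M m w v))"
    by (simp add: mat_mult_def norm_sum)
  also have "\<dots> \<le> (\<Sum>w\<in>V. Bd * (real (card V) * Bd) ^ m)"
    apply (rule sum_mono)
    unfolding norm_mult
    using assms Suc by (simp add: mult_mono)
  also have "\<dots> = (real (card V) * Bd) ^ Suc m" by simp
  finally show ?case .
qed

lemma mat_exp_summable:
  assumes "\<And>u v. cmod (M u v) \<le> Bd" "0 \<le> Bd"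
  shows "summable (\<lambda>m. cmod (mat_pow V M m u v / of_nat (fact m)))"
proof (rule summable_comparison_test)
  show "\<exists>N. \<forall>n\<ge>N. norm (cmod (mat_pow V M n u v / of_nat (fact n))) \<le> inverse (fact n) * (real (card V) * Bd) ^ n"
    using mat_pow_bound[OF assms, of V] by (auto simp: norm_divide divide_simps)
  show "summable (\<lambda>n. inverse (fact n) * (real (card V) * Bd) ^ n)" by (rule summable_exp)
qed

lemma mat_exp_unitary_row:
  assumes fin: "finite V" and u: "u \<in> V"
    and sym: "\<And>u v. M u v = M v u" and cj: "\<And>u v. cnj (M u v) = - M u v"
    and bd: "\<And>u v. cmod (M u v) \<le> Bd" and bd0: "0 \<le> Bd"
  shows "(\<Sum>w\<in>V. (cmod (mat_exp V M u w))^2) = 1"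
proof -
  define N where "N = (\<lambda>u v. - M u v)"
  have bdN: "\<And>u v. cmod (N u v) \<le> Bd" using bd by (simp add: N_def)
  define a where "a = (\<lambda>w m. mat_pow V M m u w / of_nat (fact m))"
  define b where "b = (\<lambda>w m. mat_pow V N m w u / of_nat (fact m))"
  define c where "c = (\<lambda>w m. \<Sum>i\<le>m. a w i * b w (m - i))"
  have sa: "summable (\<lambda>m. norm (a w m))" for w
    unfolding a_def using mat_exp_summable[OF bd bd0] by simp
  have sb: "summable (\<lambda>m. norm (b w m))" for w
    unfolding b_def using mat_exp_summable[OF bdN bd0] by simp
  have prod: "mat_exp V M u w * mat_exp V N w u = (\<Sum>m. c w m)" for w
    unfolding mat_exp_def c_def using Cauchy_product[OF sa sb] by (simp add: a_def b_def)
  have sc: "summable (c w)" for w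
    unfolding c_def using summable_Cauchy_product[OF sa sb] by simp
  have cm: "(\<Sum>w\<in>V. c w m) = (if m = 0 then 1 else 0)" for m
  proof -
    have "(\<Sum>w\<in>V. c w m) = (\<Sum>i\<le>m. ((-1)^(m-i) / (of_nat (fact i) * of_nat (fact (m-i)))) *
              mat_mult V (mat_pow V M i) (mat_pow V M (m-i)) u u)"
      unfolding c_def a_def b_def N_def mat_pow_neg mat_mult_def
      by (subst sum.swap) (auto simp: sum_distrib_left intro!: sum.cong)
    also have "\<dots> = (\<Sum>i\<le>m. ((-1)^(m-i) / (of_nat (fact i) * of_nat (fact (m-i)))) * mat_pow V M m u u)"
      using mat_pow_add[OF fin u] by (auto intro!: sum.cong)
    also have "\<dots> = mat_pow V M m u u / of_nat (fact m) * (\<Sum>i\<le>m. of_nat (m choose i) * 1^i * (-1)^(m-i))"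
      unfolding sum_distrib_left
    proof (rule sum.cong)
      fix i assume "i \<in> {..m}"
      then have "i \<le> m" by simp
      then show "(-1)^(m-i) / (of_nat (fact i) * of_nat (fact (m-i))) * mat_pow V M m u u =
        mat_pow V M m u u / of_nat (fact m) * (of_nat (m choose i) * 1^i * (-1)^(m-i))"
        by (simp add: binomial_fact field_simps)
    qed simp
    also have "\<dots> = mat_pow V M m u u / of_nat (fact m) * (1 + (-1))^m"
      by (simp only: binomial_ring)
    also have "\<dots> = (if m = 0 then 1 else 0)"
      by simp
    finally show ?thesis .
  qed
  have total: "(\<Sum>w\<in>V. mat_exp V M u w * mat_exp V N w u) = 1"
  proof -
    have "(\<Sum>w\<in>V. mat_exp V M u w * mat_exp V N w u) = (\<Sum>w\<in>V. \<Sum>m. c w m)"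
      using prod by simp
    also have "\<dots> = (\<Sum>m. \<Sum>w\<in>V. c w m)"
      using suminf_sum[of V c] sc by simp
    also have "\<dots> = (\<Sum>m. if m = 0 then 1 else 0)" using cm by simp
    also have "\<dots> = 1"
      using sums_single[of 0 "\<lambda>_. 1::complex"] by (simp add: sums_iff)
    finally show ?thesis .
  qed
  have conjeq: "mat_exp V N w u = cnj (mat_exp V M u w)" if w: "w \<in> V" for w
  proof -
    have cN: "(\<lambda>u v. cnj (M u v)) = N" using cj by (simp add: N_def)
    have "mat_pow V N m w u = cnj (mat_pow V M m u w)" for m
      using mat_pow_cnj[of V M m u w] mat_pow_sym[OF _ fin w u, of N m] cN
      by (simp add: N_def sym)
    then have e: "b w = (\<lambda>m. cnj (a w m))"
      by (auto simp: a_def b_def)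
    have "summable (a w)" using sa summable_norm_cancel by blast
    then have "(\<lambda>m. cnj (a w m)) sums cnj (suminf (a w))"
      using sums_cnj summable_sums by blast
    then show ?thesis using e unfolding mat_exp_def by (simp add: a_def b_def sums_iff)
  qed
  have "complex_of_real (\<Sum>w\<in>V. (cmod (mat_exp V M u w))^2) = (\<Sum>w\<in>V. mat_exp V M u w * mat_exp V N w u)"
    unfolding of_real_sum
    by (rule sum.cong) (simp_all add: conjeq complex_norm_square del: of_real_power)
  then show ?thesis using total by (metis of_real_eq_1_iff)
qed

lemma mat_pow_invariant:
  assumes bij: "bij_betw f V V" and inv: "\<And>u v. u \<in> V \<Longrightarrow> v \<in> V \<Longrightarrow> M (f u) (f v) = M u v"
    and "u \<in> V" "v \<in> V"
  shows "mat_pow V M m (f u) (f v) = mat_pow V M m u v"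
  using assms(3,4)
proof (induction m arbitrary: u v)
  case 0
  have "inj_on f V" using bij bij_betw_imp_inj_on by blast
  then show ?case using 0 by (auto dest: inj_onD)
next
  case (Suc m)
  have "mat_pow V M (Suc m) (f u) (f v) = (\<Sum>w\<in>V. M (f u) (f w) * mat_pow V M m (f w) (f v))"
    by (simp add: mat_mult_def sum.reindex_bij_betw[OF bij, of "\<lambda>w. M (f u) w * mat_pow V M m w (f v)"])
  also have "\<dots> = (\<Sum>w\<in>V. M u w * mat_pow V M m w v)"
    using Suc inv by (auto intro!: sum.cong)
  finally show ?case by (simp add: mat_mult_def)
qed

lemma mat_exp_invariant:
  assumes bij: "bij_betw f V V" and inv: "\<And>u v. u \<in> V \<Longrightarrow> v \<in> V \<Longrightarrow> M (f u) (f v) = M u v"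
    and "u \<in> V" "v \<in> V"
  shows "mat_exp V M (f u) (f v) = mat_exp V M u v"
  unfolding mat_exp_def using mat_pow_invariant[of f V M, OF assms] by simp

definition sw :: "nat \<Rightarrow> nat \<Rightarrow> nat \<Rightarrow> nat" where
  "sw x y z = (if z = x then y else if z = y then x else z)"

lemma sw_sw[simp]: "sw x y (sw x y z) = z"
  by (auto simp: sw_def)

lemma inj_sw: "inj (sw x y)"
  by (metis injI sw_sw)

lemma sw_img_img[simp]: "sw x y ` (sw x y ` C) = C"
  by (simp add: image_image)

lemma sw_ksub:
  assumes "x \<in> {1..n}" "y \<in> {1..n}" "C \<in> ksubsets n k"
  shows "sw x y ` C \<in> ksubsets n k"
proof -
  have "sw x y ` C \<subseteq> {1..n}" using assms by (auto simp: ksubsets_def sw_def)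
  moreover have "card (sw x y ` C) = card C"
    by (rule card_image) (meson inj_sw inj_on_subset subset_UNIV)
  ultimately show ?thesis using assms by (simp add: ksubsets_def)
qed

lemma sw_bij:
  assumes "x \<in> {1..n}" "y \<in> {1..n}"
  shows "bij_betw (image (sw x y)) (ksubsets n k) (ksubsets n k)"
  by (rule bij_betw_byWitness[where f'="image (sw x y)"]) (auto intro: sw_ksub[OF assms])

lemma sw_adj:
  "adj_matrix (johnson_union_adj S) (sw x y ` u) (sw x y ` v) = adj_matrix (johnson_union_adj S) u v"
proof -
  have i: "inj (sw x y)" by (rule inj_sw)
  have "sw x y ` u \<inter> sw x y ` v = sw x y ` (u \<inter> v)" using image_Int[OF i] by simp
  moreover have "card (sw x y ` (u \<inter> v)) = card (u \<inter> v)"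
    by (rule card_image) (meson i inj_on_subset subset_UNIV)
  moreover have "(sw x y ` u = sw x y ` v) = (u = v)" using inj_image_eq_iff[OF i] .
  ultimately show ?thesis by (simp add: adj_matrix_def johnson_union_adj_def)
qed

theorem mainTheorem16:
  fixes n k :: nat and S :: "nat set" and A B :: "nat set"
  assumes "1 \<le> k" and "2 * k \<le> n"
    and "S \<subseteq> {0..<k}" and "S \<noteq> {}"
    and "A \<in> ksubsets n k" and "B \<in> ksubsets n k" and "A \<noteq> B"
    and "perfect_state_transfer (ksubsets n k) (johnson_union_adj S) A B"
  shows "B = {1..n} - A"
proof (rule ccontr)
  assume nc: "B \<noteq> {1..n} - A"
  define V where "V = ksubsets n k"
  define E where "E = johnson_union_adj S"
  have finV: "finite V" unfolding V_def ksubsets_def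
    by (rule finite_subset[of _ "Pow {1..n}"]) auto
  from assms(8) obtain \<tau> where tau: "\<tau> > 0" "cmod (transition V E \<tau> A B) = 1"
    unfolding perfect_state_transfer_def V_def E_def by blast
  define M where "M = (\<lambda>u v. \<i> * of_real \<tau> * adj_matrix E u v)"
  have H: "transition V E \<tau> = mat_exp V M" unfolding transition_def M_def ..
  have symE: "E u v = E v u" for u v unfolding E_def johnson_union_adj_def by (auto simp: Int_commute)
  have symM: "M u v = M v u" for u v by (simp add: M_def adj_matrix_def symE)
  have cjM: "cnj (M u v) = - M u v" for u v by (simp add: M_def adj_matrix_def)
  have bdM: "cmod (M u v) \<le> \<bar>\<tau>\<bar>" for u v by (simp add: M_def adj_matrix_def norm_mult)
  have AV: "A \<in> V" and BV: "B \<in> V" using assms(5,6) V_def by auto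
  have fA: "finite A" "A \<subseteq> {1..n}" "card A = k" using assms(5) by (auto simp: ksubsets_def intro: finite_subset)
  have fB: "finite B" "B \<subseteq> {1..n}" "card B = k" using assms(6) by (auto simp: ksubsets_def intro: finite_subset)
  obtain x y where xy: "x \<in> {1..n}" "y \<in> {1..n}" "sw x y ` A = A" "sw x y ` B \<noteq> B"
  proof (cases "A \<inter> B = {}")
    case False
    then obtain x where x: "x \<in> A" "x \<in> B" by blast
    have "\<not> A \<subseteq> B" using card_subset_eq[OF fB(1)] fA fB assms(7) by metis
    then obtain y where y: "y \<in> A" "y \<notin> B" by blast
    have "sw x y ` A \<subseteq> A" using x y by (auto simp: sw_def)
    then have e: "sw x y ` A = A"
      by (metis image_mono subset_antisym sw_img_img)
    have "y \<in> sw x y ` B" using x by (auto simp: sw_def image_iff intro!: bexI[of _ x])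
    then show ?thesis using that[of x y] x y e fA fB by blast
  next
    case True
    then have "B \<subseteq> {1..n} - A" using fB by auto
    then obtain z where z: "z \<in> {1..n}" "z \<notin> A" "z \<notin> B" using nc by blast
    have "B \<noteq> {}" using fB assms(1) by auto
    then obtain b where b: "b \<in> B" by blast
    have bA: "b \<notin> A" using True b by blast
    have e: "sw b z ` A = A" using z bA
      by (auto simp: sw_def image_iff)
    have "z \<in> sw b z ` B" using b by (auto simp: sw_def image_iff intro!: bexI[of _ b])
    then show ?thesis using that[of b z] b z e fB by blast
  qed
  define f where "f = image (sw x y)"
  have bij: "bij_betw f V V" unfolding f_def V_def by (rule sw_bij[OF xy(1,2)])
  have inv: "M (f u) (f v) = M u v" for u v unfolding M_def E_def f_def by (simp add: sw_adj)
  have fBV: "f B \<in> V" using bij BV bij_betwE by blast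
  have "mat_exp V M (f A) (f B) = mat_exp V M A B"
    by (rule mat_exp_invariant[of f V M, OF bij inv AV BV])
  then have e1: "cmod (mat_exp V M A (f B)) = 1" using xy(3) tau H by (simp add: f_def)
  have e2: "cmod (mat_exp V M A B) = 1" using tau H by simp
  have ne: "f B \<noteq> B" using xy(4) f_def by simp
  have "(\<Sum>w\<in>{B, f B}. (cmod (mat_exp V M A w))^2) \<le> (\<Sum>w\<in>V. (cmod (mat_exp V M A w))^2)"
    by (rule sum_mono2[OF finV]) (use BV fBV in auto)
  also have "\<dots> = 1" by (rule mat_exp_unitary_row[OF finV AV symM cjM bdM]) simp
  finally show False using e1 e2 ne by simp
qed

end
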